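(* Let $d>0$, let $J$ satisfy (J) and $\int_{-\infty}^0\int_0^{+\infty}J(x-y)\,dy\,dx<+\infty$, but suppose there is no $\lambda>0$ with $\int_{\mathbb{R}}J(x)e^{\lambda x}dx<\infty$; let $f$ satisfy (f3). For each $\mu>0$ let $(c_\mu,\phi_\mu)$ be the unique pair with $c_\mu>0$ and $\phi_\mu\in C^1((-\infty,0])$ nonnegative and nonincreasing such that $$d\int_{-\infty}^0J(x-y)\phi_\mu(y)dy-d\phi_\mu(x)+c_\mu\phi_\mu'(x)+f(\phi_\mu(x))=0\ (x<0),\ \phi_\mu(-\infty)=1,\ \phi_\mu(0)=0,\ c_\mu=\mu\int_{-\infty}^0\int_0^{+\infty}J(x-y)\phi_\mu(x)dydx.$$ Then $c_\mu\to+\infty$ as $\mu\to+\infty$.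
   Context: Condition (J): $J\in C(\mathbb{R})\cap L^\infty(\mathbb{R})$, $J\ge 0$, $J(0)>0$, $\int_{\mathbb{R}}J=1$, $J$ even. Condition (f3): $f\in C^1([0,\infty))$, $f(0)=f(1)=0$, $f>0$ in $(0,1)$, $f'(0)>0>f'(1)$, $f(u)/u$ nonincreasing in $u>0$. Under these assumptions the pair $(c_\mu,\phi_\mu)$ exists and is unique for each $\mu>0$. *)

theory Defs
  imports "HOL-Analysis.Analysis"
begin

end

theory Submission
  imports Defs
begin



lemma iter_add:
  fixes f g :: "real \<Rightarrow> real \<Rightarrow> ennreal"
  assumes [measurable]: "case_prod f \<in> borel_measurable (lborel \<Otimes>\<^sub>M lborel)"
    and [measurable]: "case_prod g \<in> borel_measurable (lborel \<Otimes>\<^sub>M lborel)"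
  shows "(\<integral>\<^sup>+x. \<integral>\<^sup>+y. f x y + g x y \<partial>lborel \<partial>lborel)
       = (\<integral>\<^sup>+x. \<integral>\<^sup>+y. f x y \<partial>lborel \<partial>lborel) + (\<integral>\<^sup>+x. \<integral>\<^sup>+y. g x y \<partial>lborel \<partial>lborel)"
proof -
  have "(\<integral>\<^sup>+x. \<integral>\<^sup>+y. f x y + g x y \<partial>lborel \<partial>lborel)
       = (\<integral>\<^sup>+x. (\<integral>\<^sup>+y. f x y \<partial>lborel) + (\<integral>\<^sup>+y. g x y \<partial>lborel) \<partial>lborel)"
    by (intro nn_integral_cong nn_integral_add) measurable
  also have "\<dots> = (\<integral>\<^sup>+x. \<integral>\<^sup>+y. f x y \<partial>lborel \<partial>lborel) + (\<integral>\<^sup>+x. \<integral>\<^sup>+y. g x y \<partial>lborel \<partial>lborel)"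
    by (intro nn_integral_add) measurable
  finally show ?thesis .
qed

lemma iter_swap:
  fixes f :: "real \<Rightarrow> real \<Rightarrow> ennreal"
  assumes [measurable]: "case_prod f \<in> borel_measurable (lborel \<Otimes>\<^sub>M lborel)"
  shows "(\<integral>\<^sup>+x. \<integral>\<^sup>+y. f x y \<partial>lborel \<partial>lborel) = (\<integral>\<^sup>+x. \<integral>\<^sup>+y. f y x \<partial>lborel \<partial>lborel)"
  using lborel_pair.Fubini'[of f] by simp

lemma meas_test:
  fixes J q :: "real \<Rightarrow> real"
  assumes Jc: "continuous_on UNIV J" and [measurable]: "q \<in> borel_measurable borel"
  shows "(\<lambda>(x,y). ennreal (indicator {a..b} x * indicator {..<c} y * J (x - y) * q y)) \<in> borel_measurable (lborel \<Otimes>\<^sub>M lborel)"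
proof -
  have [measurable]: "J \<in> borel_measurable borel" using Jc by (simp add: borel_measurable_continuous_onI)
  show ?thesis by measurable
qed



lemma J_shift:
  fixes J :: "real \<Rightarrow> real"
  assumes Jc: "continuous_on UNIV J" and Jn: "\<And>x. J x \<ge> 0" and Jint: "integrable lborel J"
    and Jm: "integral\<^sup>L lborel J = 1"
  shows "(\<integral>\<^sup>+y. ennreal (J (x - y)) \<partial>lborel) = 1"
proof -
  have [measurable]: "J \<in> borel_measurable borel" using Jc by (simp add: borel_measurable_continuous_onI)
  have "(\<integral>\<^sup>+y. ennreal (J y) \<partial>lborel) = 1"
    using nn_integral_eq_integral[OF Jint] Jn Jm by simp
  moreover have "(\<integral>\<^sup>+y. ennreal (J y) \<partial>lborel) = (\<integral>\<^sup>+y. ennreal (J (x - y)) \<partial>lborel)"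
    using nn_integral_real_affine[of "\<lambda>y. ennreal (J y)" "-1" x] by simp
  ultimately show ?thesis by simp
qed

lemma J_shift_int:
  fixes J :: "real \<Rightarrow> real"
  assumes Jint: "integrable lborel J"
  shows "integrable lborel (\<lambda>y. J (x - y))"
proof -
  have "integrable lborel (\<lambda>y. J (x + (-1) * y))"
    using lborel_integrable_real_affine_iff[of "-1" J x] Jint by simp
  then show ?thesis by simp
qed

lemma L1:
  fixes J p p' f :: "real \<Rightarrow> real" and cc d M x1 R :: real
  assumes Jc: "continuous_on UNIV J" and Jn: "\<And>x. J x \<ge> 0" and Jint: "integrable lborel J"
    and Jm: "integral\<^sup>L lborel J = 1" and Je: "\<And>x. J (- x) = J x"
    and dpos: "d > 0" and fc: "continuous_on {0..} f"
    and pd: "\<And>x. x \<le> 0 \<Longrightarrow> (p has_real_derivative p' x) (at x within {..0})"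
    and pn: "\<And>x. x \<le> 0 \<Longrightarrow> p x \<ge> 0"
    and pb: "\<And>x. x \<le> 0 \<Longrightarrow> p x \<le> 1"
    and pm: "\<And>x y. x \<le> y \<Longrightarrow> y \<le> 0 \<Longrightarrow> p y \<le> p x"
    and peq: "\<And>x. x < 0 \<Longrightarrow> d * (LINT y:{..0}|lborel. J (x - y) * p y) - d * p x + cc * p' x + f (p x) = 0"
    and p0: "p 0 = 0"
    and Mb: "(\<integral>\<^sup>+x. \<integral>\<^sup>+y. ennreal (indicator {..0} x * indicator {0..} y * J (x - y) * p x) \<partial>lborel \<partial>lborel) \<le> ennreal M"
    and x1: "x1 < 0" and R: "R \<ge> 0" and Mn: "M \<ge> 0"
  shows "(\<integral>\<^sup>+x. \<integral>\<^sup>+y. ennreal (indicator {x1..0} x * indicator {..<x1-R} y * J (x - y) * (p (x1 - R) - p x1)) \<partial>lborel \<partial>lborel) < \<infinity> \<and>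
    cc * p x1 + d * M \<ge> d * enn2real (\<integral>\<^sup>+x. \<integral>\<^sup>+y. ennreal (indicator {x1..0} x * indicator {..<x1-R} y * J (x - y) * (p (x1 - R) - p x1)) \<partial>lborel \<partial>lborel) + integral {x1..0} (\<lambda>x. f (p x))"
proof -
  define S where "S = {x1..0}"
  define q where "q = (\<lambda>y. indicator {..0} y * p y)"
  define \<kappa> where "\<kappa> = p (x1 - R) - p x1"
  have \<kappa>: "\<kappa> \<ge> 0" unfolding \<kappa>_def using pm[of "x1 - R" x1] x1 R by simp
  have [measurable]: "J \<in> borel_measurable borel" using Jc by (simp add: borel_measurable_continuous_onI)
  have pcont: "continuous_on {..0} p"
    unfolding continuous_on_eq_continuous_within using pd DERIV_continuous by fastforce
  have [measurable]: "q \<in> borel_measurable borel"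
    unfolding q_def using borel_measurable_continuous_on_indicator[OF _ pcont] by simp
  have qn: "q y \<ge> 0" for y using pn by (simp add: q_def indicator_def)
  have qb: "q y \<le> 1" for y using pb by (simp add: q_def indicator_def)
  have Sq: "y \<in> S \<Longrightarrow> q y = p y" for y using x1 by (simp add: q_def S_def)
  define P where "P x = (LINT y:{..0}|lborel. J (x - y) * p y)" for x
  have Pval: "ennreal (P x) = (\<integral>\<^sup>+y. ennreal (J (x - y) * q y) \<partial>lborel)" and Pn: "P x \<ge> 0" for x
  proof -
    have eq: "P x = integral\<^sup>L lborel (\<lambda>y. J (x - y) * q y)"
      unfolding P_def set_lebesgue_integral_def q_def
      by (intro Bochner_Integration.integral_cong) (auto simp: indicator_def)
    have int: "integrable lborel (\<lambda>y. J (x - y) * q y)"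
    proof (rule Bochner_Integration.integrable_bound[OF J_shift_int[OF Jint, of x]])
      show "(\<lambda>y. J (x - y) * q y) \<in> borel_measurable lborel" by measurable
      show "AE y in lborel. norm (J (x - y) * q y) \<le> norm (J (x - y))"
    proof (rule AE_I2)
      fix y show "norm (J (x - y) * q y) \<le> norm (J (x - y))"
        using qn[of y] qb[of y] Jn[of "x-y"] by (simp add: mult_left_le)
    qed
    qed
    show "ennreal (P x) = (\<integral>\<^sup>+y. ennreal (J (x - y) * q y) \<partial>lborel)"
      unfolding eq by (rule nn_integral_eq_integral[symmetric]) (use int qn Jn in auto)
    show "P x \<ge> 0" unfolding eq using qn Jn by (simp add: integral_nonneg_AE)
  qed
  have pS: "continuous_on S p" using pcont x1 by (auto simp: S_def intro: continuous_on_subset)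
  have fS: "continuous_on S (\<lambda>x. f (p x))"
    by (rule continuous_on_compose2[OF fc pS]) (use pn in \<open>auto simp: S_def\<close>)
  have ftc: "(p' has_integral (p 0 - p x1)) S"
    unfolding S_def
  proof (rule fundamental_theorem_of_calculus)
    show "x1 \<le> 0" using x1 by simp
    fix x assume "x \<in> {x1..0}"
    then have "(p has_real_derivative p' x) (at x within {x1..0})"
      using pd[of x] by (auto intro: DERIV_subset)
    then show "(p has_vector_derivative p' x) (at x within {x1..0})"
      by (simp add: has_real_derivative_iff_has_vector_derivative)
  qed
  define Ip where "Ip = integral S p"
  define If where "If = integral S (\<lambda>x. f (p x))"
  have hp: "(p has_integral Ip) S" unfolding Ip_def S_def by (rule integrable_integral, rule integrable_continuous_interval) (use pS in \<open>simp add: S_def\<close>)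
  have hf: "((\<lambda>x. f (p x)) has_integral If) S" unfolding If_def S_def by (rule integrable_integral, rule integrable_continuous_interval) (use fS in \<open>simp add: S_def\<close>)
  have hg: "((\<lambda>x. d * p x - cc * p' x - f (p x)) has_integral (d * Ip - cc * (p 0 - p x1) - If)) S"
    by (intro has_integral_diff has_integral_mult_right hp ftc hf)
  define IP where "IP = (d * Ip + cc * p x1 - If) / d"
  have hP: "(P has_integral IP) S"
  proof -
    have "((\<lambda>x. (1/d) * (d * p x - cc * p' x - f (p x))) has_integral (1/d) * (d * Ip - cc * (p 0 - p x1) - If)) S"
      by (intro has_integral_mult_right hg)
    then have "((\<lambda>x. (1/d) * (d * p x - cc * p' x - f (p x))) has_integral IP) S"
      using dpos p0 by (simp add: IP_def field_simps)
    moreover have "P x = (1/d) * (d * p x - cc * p' x - f (p x))" if "x \<in> S - {0}" for x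
    proof -
      from that have "x < 0" by (auto simp: S_def)
      from peq[OF this] dpos show ?thesis by (simp add: P_def field_simps)
    qed
    ultimately show ?thesis by (intro has_integral_spike_finite[of "{0}" S P "\<lambda>x. (1/d) * (d * p x - cc * p' x - f (p x))" IP]) auto
  qed
  have hPS: "(\<integral>\<^sup>+x. ennreal (P x) * indicator S x \<partial>lborel) = ennreal IP"
    by (rule nn_integral_has_integral_lebesgue'[OF _ hP]) (use Pn in auto)
  have hpS: "(\<integral>\<^sup>+x. ennreal (p x) * indicator S x \<partial>lborel) = ennreal Ip"
    by (rule nn_integral_has_integral_lebesgue'[OF _ hp]) (use pn in \<open>auto simp: S_def\<close>)
  have X: "(\<integral>\<^sup>+x. \<integral>\<^sup>+y. ennreal (indicator S x * J (x - y) * q y) \<partial>lborel \<partial>lborel) = ennreal IP"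
    unfolding hPS[symmetric]
    by (intro nn_integral_cong, case_tac "x \<in> S") (simp_all add: Pval)
  have Y: "(\<integral>\<^sup>+x. \<integral>\<^sup>+y. ennreal (indicator S x * J (x - y) * q x) \<partial>lborel \<partial>lborel) = ennreal Ip"
    unfolding hpS[symmetric]
  proof (intro nn_integral_cong)
    fix x :: real
    show "(\<integral>\<^sup>+y. ennreal (indicator S x * J (x - y) * q x) \<partial>lborel) = ennreal (p x) * indicator S x"
    proof (cases "x \<in> S")
      case True
      have "(\<integral>\<^sup>+y. ennreal (indicator S x * J (x - y) * q x) \<partial>lborel)
          = (\<integral>\<^sup>+y. ennreal (q x) * ennreal (J (x - y)) \<partial>lborel)"
        using True Jn qn by (intro nn_integral_cong) (simp add: ennreal_mult[symmetric] mult.commute)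
      also have "\<dots> = ennreal (q x) * (\<integral>\<^sup>+y. ennreal (J (x - y)) \<partial>lborel)"
        by (rule nn_integral_cmult) measurable
      also have "\<dots> = ennreal (p x) * indicator S x"
        using True Sq J_shift[OF Jc Jn Jint Jm] by simp
      finally show ?thesis .
    qed simp
  qed
  define A1 where "A1 = (\<integral>\<^sup>+x. \<integral>\<^sup>+y. ennreal (indicator S x * indicator S y * J (x - y) * q y) \<partial>lborel \<partial>lborel)"
  define A2 where "A2 = (\<integral>\<^sup>+x. \<integral>\<^sup>+y. ennreal (indicator S x * indicator {..<x1} y * J (x - y) * q y) \<partial>lborel \<partial>lborel)"
  define B1 where "B1 = (\<integral>\<^sup>+x. \<integral>\<^sup>+y. ennreal (indicator S x * indicator S y * J (x - y) * q x) \<partial>lborel \<partial>lborel)"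
  define B2 where "B2 = (\<integral>\<^sup>+x. \<integral>\<^sup>+y. ennreal (indicator S x * indicator {0<..} y * J (x - y) * q x) \<partial>lborel \<partial>lborel)"
  define B3 where "B3 = (\<integral>\<^sup>+x. \<integral>\<^sup>+y. ennreal (indicator S x * indicator {..<x1} y * J (x - y) * q x) \<partial>lborel \<partial>lborel)"
  define E where "E = (\<integral>\<^sup>+x. \<integral>\<^sup>+y. ennreal (indicator {x1..0} x * indicator {..<x1-R} y * J (x - y) * \<kappa>) \<partial>lborel \<partial>lborel)"
  have S_meas[measurable]: "S \<in> sets borel" by (simp add: S_def)
  have XA: "ennreal IP = A1 + A2"
  proof -
    have "(\<integral>\<^sup>+x. \<integral>\<^sup>+y. ennreal (indicator S x * J (x - y) * q y) \<partial>lborel \<partial>lborel)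
      = (\<integral>\<^sup>+x. \<integral>\<^sup>+y. ennreal (indicator S x * indicator S y * J (x - y) * q y) + ennreal (indicator S x * indicator {..<x1} y * J (x - y) * q y) \<partial>lborel \<partial>lborel)"
    proof (intro nn_integral_cong)
      fix x y :: real
      have i: "(indicator {..0} y :: real) = indicator S y + indicator {..<x1} y"
        using x1 by (auto simp: indicator_def S_def)
      have "indicator S x * J (x - y) * q y = indicator S x * indicator S y * J (x - y) * q y + indicator S x * indicator {..<x1} y * J (x - y) * q y"
        using x1 by (cases "y \<in> S"; cases "y < x1") (simp_all add: q_def S_def indicator_def)
      moreover have "indicator S x * indicator S y * J (x - y) * q y \<ge> 0" "indicator S x * indicator {..<x1} y * J (x - y) * q y \<ge> 0"
        using Jn[of "x-y"] qn[of y] by auto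
      ultimately show "ennreal (indicator S x * J (x - y) * q y) = ennreal (indicator S x * indicator S y * J (x - y) * q y) + ennreal (indicator S x * indicator {..<x1} y * J (x - y) * q y)"
        by (simp add: ennreal_plus)
    qed
    also have "\<dots> = A1 + A2" unfolding A1_def A2_def by (rule iter_add) measurable
    finally show ?thesis using X by simp
  qed
  have YB: "ennreal Ip = B1 + B2 + B3"
  proof -
    have "(\<integral>\<^sup>+x. \<integral>\<^sup>+y. ennreal (indicator S x * J (x - y) * q x) \<partial>lborel \<partial>lborel)
      = (\<integral>\<^sup>+x. \<integral>\<^sup>+y. (ennreal (indicator S x * indicator S y * J (x - y) * q x) + ennreal (indicator S x * indicator {0<..} y * J (x - y) * q x)) + ennreal (indicator S x * indicator {..<x1} y * J (x - y) * q x) \<partial>lborel \<partial>lborel)"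
    proof (intro nn_integral_cong)
      fix x y :: real
      have i: "(1::real) = indicator S y + indicator {0<..} y + indicator {..<x1} y"
        using x1 by (auto simp: indicator_def S_def)
      have "indicator S x * J (x - y) * q x = indicator S x * indicator S y * J (x - y) * q x + indicator S x * indicator {0<..} y * J (x - y) * q x + indicator S x * indicator {..<x1} y * J (x - y) * q x"
        by (subst (1) mult_1_right[symmetric, of "indicator S x"], subst i) (simp add: algebra_simps)
      moreover have "indicator S x * indicator S y * J (x - y) * q x \<ge> 0" "indicator S x * indicator {0<..} y * J (x - y) * q x \<ge> 0" "indicator S x * indicator {..<x1} y * J (x - y) * q x \<ge> 0"
        using Jn[of "x-y"] qn[of x] by auto
      ultimately show "ennreal (indicator S x * J (x - y) * q x) = ennreal (indicator S x * indicator S y * J (x - y) * q x) + ennreal (indicator S x * indicator {0<..} y * J (x - y) * q x) + ennreal (indicator S x * indicator {..<x1} y * J (x - y) * q x)"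
        by (simp add: ennreal_plus)
    qed
    also have "\<dots> = (\<integral>\<^sup>+x. \<integral>\<^sup>+y. (ennreal (indicator S x * indicator S y * J (x - y) * q x) + ennreal (indicator S x * indicator {0<..} y * J (x - y) * q x)) \<partial>lborel \<partial>lborel) + B3"
      unfolding B3_def by (rule iter_add) measurable
    also have "\<dots> = B1 + B2 + B3" unfolding B1_def B2_def by (subst iter_add) measurable
    finally show ?thesis using Y by simp
  qed
  have AB1: "A1 = B1"
    unfolding A1_def B1_def
    by (subst iter_swap) (measurable, simp add: mult.commute mult.left_commute Je[of "x - y" for x y, simplified])
  have AB2: "B3 + E \<le> A2"
  proof -
    have "B3 + E = (\<integral>\<^sup>+x. \<integral>\<^sup>+y. ennreal (indicator S x * indicator {..<x1} y * J (x - y) * q x) + ennreal (indicator {x1..0} x * indicator {..<x1-R} y * J (x - y) * \<kappa>) \<partial>lborel \<partial>lborel)"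
      unfolding B3_def E_def by (rule iter_add[symmetric]) measurable
    also have "\<dots> \<le> A2" unfolding A2_def
    proof (intro nn_integral_mono)
      fix x y :: real
      show "ennreal (indicator S x * indicator {..<x1} y * J (x - y) * q x) + ennreal (indicator {x1..0} x * indicator {..<x1-R} y * J (x - y) * \<kappa>)
          \<le> ennreal (indicator S x * indicator {..<x1} y * J (x - y) * q y)"
      proof (cases "x \<in> S \<and> y < x1")
        case True
        then have xs: "x1 \<le> x" "x \<le> 0" by (auto simp: S_def)
        have qx: "q x = p x" using True Sq by auto
        have qy: "q y = p y" using True x1 by (simp add: q_def)
        have "p x \<le> p x1" using pm xs by auto
        moreover have "p x1 \<le> p y" using pm True x1 by auto
        moreover have "y < x1 - R \<Longrightarrow> p (x1 - R) \<le> p y" using pm x1 R by auto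
        ultimately have A: "p x + indicator {..<x1-R} y * \<kappa> \<le> p y"
          unfolding \<kappa>_def by (cases "y < x1 - R") (auto simp: indicator_def)
        have "J (x - y) * (p x + indicator {..<x1-R} y * \<kappa>) \<le> J (x - y) * p y"
          using A Jn[of "x - y"] by (rule mult_left_mono)
        then have le: "J (x - y) * p x + indicator {..<x1-R} y * J (x - y) * \<kappa> \<le> J (x - y) * p y"
          by (simp add: algebra_simps)
        have "ennreal (indicator S x * indicator {..<x1} y * J (x - y) * q x) + ennreal (indicator {x1..0} x * indicator {..<x1-R} y * J (x - y) * \<kappa>)
            = ennreal (J (x - y) * p x + indicator {..<x1-R} y * J (x - y) * \<kappa>)"
          using True qx xs Jn[of "x - y"] \<kappa> pn[of x] by (simp add: S_def ennreal_plus)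
        also have "\<dots> \<le> ennreal (J (x - y) * p y)" using le by (rule ennreal_leI)
        finally show ?thesis using True qy by simp
      next
        case False
        then have "x \<notin> S \<or> \<not> y < x1" by blast
        then show ?thesis using R by (auto simp: S_def indicator_def)
      qed
    qed
    finally show ?thesis .
  qed
  have BM: "B2 \<le> ennreal M"
  proof -
    have "B2 \<le> (\<integral>\<^sup>+x. \<integral>\<^sup>+y. ennreal (indicator {..0} x * indicator {0..} y * J (x - y) * p x) \<partial>lborel \<partial>lborel)"
      unfolding B2_def
    proof (intro nn_integral_mono ennreal_leI)
      fix x y :: real
      show "indicator S x * indicator {0<..} y * J (x - y) * q x \<le> indicator {..0} x * indicator {0..} y * J (x - y) * p x"
        using Jn[of "x-y"] pn[of x] x1 by (auto simp: S_def q_def indicator_def)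
    qed
    then show ?thesis using Mb by simp
  qed
  have main: "ennreal Ip + E \<le> ennreal IP + ennreal M"
  proof -
    have "ennreal Ip + E = B1 + B2 + (B3 + E)" using YB by (simp add: ac_simps)
    also have "\<dots> \<le> A1 + ennreal M + A2" using AB1 AB2 BM by (intro add_mono) auto
    also have "\<dots> = ennreal IP + ennreal M" using XA by (simp add: ac_simps)
    finally show ?thesis .
  qed
  have Efin: "E \<noteq> \<infinity>" using main by (auto simp: top_unique)
  have IPn: "IP \<ge> 0" using hP Pn by (auto intro: has_integral_nonneg)
  have Ipn: "Ip \<ge> 0" using hp pn by (auto simp: S_def intro: has_integral_nonneg)
  have "ennreal (Ip + enn2real E) = ennreal Ip + E"
    using Ipn Efin by (simp add: ennreal_plus[symmetric] ennreal_enn2real_if)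
  moreover have "ennreal (IP + M) = ennreal IP + ennreal M" using IPn Mn by simp
  ultimately have "ennreal (Ip + enn2real E) \<le> ennreal (IP + M)" using main by simp
  then have "Ip + enn2real E \<le> IP + M" using IPn Mn ennreal_le_iff[of "IP + M" "Ip + enn2real E"] by linarith
  then have "d * enn2real E \<le> d * (IP + M - Ip)" using dpos by simp
  also have "\<dots> = cc * p x1 + d * M - If" using dpos unfolding IP_def by (simp add: field_simps)
  finally have "cc * p x1 + d * M - If \<ge> d * enn2real E" .
  then show ?thesis using Efin unfolding E_def \<kappa>_def If_def S_def by (simp add: less_top)
qed

lemma L2:
  fixes J :: "real \<Rightarrow> real" and x1 R \<kappa> :: real
  assumes Jc: "continuous_on UNIV J" and Jn: "\<And>x. J x \<ge> 0"
    and x1: "x1 \<le> -1" and R: "R \<ge> 0" and \<kappa>: "\<kappa> \<ge> 0"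
  shows "ennreal \<kappa> * (\<integral>\<^sup>+z. ennreal (indicator {R+1..} z * J z) \<partial>lborel)
     \<le> (\<integral>\<^sup>+x. \<integral>\<^sup>+y. ennreal (indicator {x1..0} x * indicator {..<x1-R} y * J (x - y) * \<kappa>) \<partial>lborel \<partial>lborel)"
proof -
  have [measurable]: "J \<in> borel_measurable borel" using Jc by (simp add: borel_measurable_continuous_onI)
  define T where "T = (\<integral>\<^sup>+z. ennreal (indicator {R+1..} z * J z) \<partial>lborel)"
  have inner: "ennreal \<kappa> * T * indicator {x1..<x1+1} x \<le> (\<integral>\<^sup>+y. ennreal (indicator {x1..0} x * indicator {..<x1-R} y * J (x - y) * \<kappa>) \<partial>lborel)" for x
  proof (cases "x \<in> {x1..<x1+1}")
    case True
    then have xS: "x1 \<le> x" "x \<le> 0" "x < x1 + 1" using x1 by auto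
    have "(\<integral>\<^sup>+y. ennreal (indicator {..<x1-R} y * J (x - y)) \<partial>lborel)
        = (\<integral>\<^sup>+z. ennreal (indicator {..<x1-R} (x + (-1) * z) * J (x - (x + (-1) * z))) \<partial>lborel)"
      using nn_integral_real_affine[of "\<lambda>y. ennreal (indicator {..<x1-R} y * J (x - y))" "-1" x] by simp
    also have "\<dots> \<ge> T" unfolding T_def
    proof (intro nn_integral_mono ennreal_leI)
      fix z :: real
      show "indicator {R+1..} z * J z \<le> indicator {..<x1-R} (x + (-1) * z) * J (x - (x + (-1) * z))"
        using xS Jn[of z] by (auto simp: indicator_def)
    qed
    finally have "T \<le> (\<integral>\<^sup>+y. ennreal (indicator {..<x1-R} y * J (x - y)) \<partial>lborel)" .
    then have "ennreal \<kappa> * T \<le> ennreal \<kappa> * (\<integral>\<^sup>+y. ennreal (indicator {..<x1-R} y * J (x - y)) \<partial>lborel)"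
      by (rule mult_left_mono) simp
    also have "\<dots> = (\<integral>\<^sup>+y. ennreal \<kappa> * ennreal (indicator {..<x1-R} y * J (x - y)) \<partial>lborel)"
      by (rule nn_integral_cmult[symmetric]) measurable
    also have "\<dots> = (\<integral>\<^sup>+y. ennreal (indicator {x1..0} x * indicator {..<x1-R} y * J (x - y) * \<kappa>) \<partial>lborel)"
      using xS \<kappa> Jn by (intro nn_integral_cong) (simp add: ennreal_mult[symmetric] mult_ac)
    finally show ?thesis using True by simp
  qed simp
  have "ennreal \<kappa> * T = (\<integral>\<^sup>+x. ennreal \<kappa> * T * indicator {x1..<x1+1} x \<partial>lborel)"
    by (subst nn_integral_cmult_indicator) auto
  also have "\<dots> \<le> (\<integral>\<^sup>+x. \<integral>\<^sup>+y. ennreal (indicator {x1..0} x * indicator {..<x1-R} y * J (x - y) * \<kappa>) \<partial>lborel \<partial>lborel)"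
    by (intro nn_integral_mono inner)
  finally show ?thesis unfolding T_def .
qed

lemma L3:
  fixes J p :: "real \<Rightarrow> real"
  assumes Jc: "continuous_on UNIV J" and Jn: "\<And>x. J x \<ge> 0" and Je: "\<And>x. J (- x) = J x"
    and pn: "\<And>x. x \<le> 0 \<Longrightarrow> p x \<ge> 0"
    and pm: "\<And>x y. x \<le> y \<Longrightarrow> y \<le> 0 \<Longrightarrow> p y \<le> p x"
  shows "ennreal (p (-1)) * (\<integral>\<^sup>+z. ennreal (indicator {2..} z * J z) \<partial>lborel)
     \<le> (\<integral>\<^sup>+x. \<integral>\<^sup>+y. ennreal (indicator {..0} x * indicator {0..} y * J (x - y) * p x) \<partial>lborel \<partial>lborel)"
proof -
  have [measurable]: "J \<in> borel_measurable borel" using Jc by (simp add: borel_measurable_continuous_onI)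
  define T where "T = (\<integral>\<^sup>+z. ennreal (indicator {2..} z * J z) \<partial>lborel)"
  have inner: "ennreal (p (-1)) * T * indicator {-2..<-1} x \<le> (\<integral>\<^sup>+y. ennreal (indicator {..0} x * indicator {0..} y * J (x - y) * p x) \<partial>lborel)" for x
  proof (cases "x \<in> {-2..<-1}")
    case True
    then have xS: "-2 \<le> x" "x < -1" by auto
    have "(\<integral>\<^sup>+y. ennreal (indicator {0..} y * J (x - y)) \<partial>lborel)
        = (\<integral>\<^sup>+z. ennreal (indicator {0..} (x + 1 * z) * J (x - (x + 1 * z))) \<partial>lborel)"
      using nn_integral_real_affine[of "\<lambda>y. ennreal (indicator {0..} y * J (x - y))" "1" x] by simp
    also have "\<dots> \<ge> T" unfolding T_def
    proof (intro nn_integral_mono ennreal_leI)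
      fix z :: real
      show "indicator {2..} z * J z \<le> indicator {0..} (x + 1 * z) * J (x - (x + 1 * z))"
        using xS Jn[of z] Je[of z] by (auto simp: indicator_def)
    qed
    finally have "T \<le> (\<integral>\<^sup>+y. ennreal (indicator {0..} y * J (x - y)) \<partial>lborel)" .
    moreover have "p (-1) \<le> p x" using pm xS by auto
    ultimately have "ennreal (p (-1)) * T \<le> ennreal (p x) * (\<integral>\<^sup>+y. ennreal (indicator {0..} y * J (x - y)) \<partial>lborel)"
      by (intro mult_mono ennreal_leI) auto
    also have "\<dots> = (\<integral>\<^sup>+y. ennreal (p x) * ennreal (indicator {0..} y * J (x - y)) \<partial>lborel)"
      by (rule nn_integral_cmult[symmetric]) measurable
    also have "\<dots> = (\<integral>\<^sup>+y. ennreal (indicator {..0} x * indicator {0..} y * J (x - y) * p x) \<partial>lborel)"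
      using xS pn[of x] Jn by (intro nn_integral_cong) (simp add: ennreal_mult[symmetric] mult_ac)
    finally show ?thesis using True by simp
  qed simp
  have "ennreal (p (-1)) * T = (\<integral>\<^sup>+x. ennreal (p (-1)) * T * indicator {-2..<-1::real} x \<partial>lborel)"
    by (subst nn_integral_cmult_indicator) auto
  also have "\<dots> \<le> (\<integral>\<^sup>+x. \<integral>\<^sup>+y. ennreal (indicator {..0} x * indicator {0..} y * J (x - y) * p x) \<partial>lborel \<partial>lborel)"
    by (intro nn_integral_mono inner)
  finally show ?thesis unfolding T_def .
qed



lemma L4:
  fixes J :: "real \<Rightarrow> real" and h K :: real
  assumes Jc: "continuous_on UNIV J" and Jn: "\<And>x. J x \<ge> 0" and Jint: "integrable lborel J"
    and Jm: "integral\<^sup>L lborel J = 1" and hpos: "h > 0" and Kn: "K \<ge> 0"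
    and Tb: "\<And>k::nat. (\<integral>\<^sup>+z. ennreal (indicator {real k * h + 1..} z * J z) \<partial>lborel) \<le> ennreal (K * (1/2)^k)"
  shows "\<exists>lam>0. (\<integral>\<^sup>+x. ennreal (J x * exp (lam * x)) \<partial>lborel) < \<infinity>"
proof -
  have [measurable]: "J \<in> borel_measurable borel" using Jc by (simp add: borel_measurable_continuous_onI)
  define lam where "lam = ln 2 / (2*h)"
  have lam: "lam > 0" using hpos by (simp add: lam_def)
  define e where "e = exp (lam * h)"
  have epos: "e > 0" by (simp add: e_def)
  have "e * e = exp (2 * lam * h)" by (simp add: e_def exp_add[symmetric])
  also have "\<dots> = 2" using hpos by (simp add: lam_def)
  finally have ee: "e * e = 2" .
  have e2: "e < 2"
  proof (rule ccontr)
    assume "\<not> e < 2"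
    then have "2 * 2 \<le> e * e" by (intro mult_mono) auto
    then show False using ee by simp
  qed
  define r where "r = e / 2"
  have r: "0 \<le> r" "r < 1" using epos e2 by (auto simp: r_def)
  define I where "I k = {real k * h + 1 ..< real (Suc k) * h + 1}" for k
  define C where "C = exp (lam * (h + 1))"
  have Cpos: "C > 0" by (simp add: C_def)
  have expk: "exp (lam * (real (Suc k) * h + 1)) = C * e ^ k" for k
  proof -
    have "lam * (real (Suc k) * h + 1) = lam * (h + 1) + real k * (lam * h)" by (simp add: algebra_simps)
    then show ?thesis by (simp add: C_def e_def exp_add exp_of_nat_mult)
  qed
  have pw: "ennreal (J x * exp (lam * x)) \<le> ennreal (exp lam) * ennreal (J x) + (\<Sum>k. ennreal (C * e ^ k) * ennreal (indicator (I k) x * J x))" for x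
  proof (cases "x < 1")
    case True
    have "J x * exp (lam * x) \<le> exp lam * J x"
      using True lam Jn[of x] by (simp add: mult.commute mult_left_mono)
    then have "ennreal (J x * exp (lam * x)) \<le> ennreal (exp lam) * ennreal (J x)"
      using Jn[of x] by (simp add: ennreal_mult[symmetric] ennreal_leI)
    then show ?thesis by (rule order_trans) simp
  next
    case False
    define k where "k = nat \<lfloor>(x - 1) / h\<rfloor>"
    have "0 \<le> (x - 1) / h" using False hpos by simp
    then have k1: "real k \<le> (x - 1) / h" and k2: "(x - 1) / h < real k + 1"
      unfolding k_def by (auto simp: of_nat_nat)
    have "real k * h \<le> x - 1" using k1 hpos by (simp add: field_simps)
    moreover have "x - 1 < (real k + 1) * h" using k2 hpos by (simp add: field_simps)
    ultimately have xI: "x \<in> I k" by (simp add: I_def algebra_simps)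
    have "exp (lam * x) \<le> exp (lam * (real (Suc k) * h + 1))"
      using xI lam by (simp add: I_def)
    then have ex: "exp (lam * x) \<le> C * e ^ k" using expk[of k] by linarith
    have "J x * exp (lam * x) \<le> J x * (C * e ^ k)" by (rule mult_left_mono[OF ex Jn])
    then have "J x * exp (lam * x) \<le> C * e ^ k * (indicator (I k) x * J x)"
      using xI by (simp add: mult.commute)
    then have "ennreal (J x * exp (lam * x)) \<le> ennreal (C * e ^ k) * ennreal (indicator (I k) x * J x)"
      using Jn[of x] Cpos epos by (simp add: ennreal_mult[symmetric] ennreal_leI)
    also have "\<dots> \<le> (\<Sum>k. ennreal (C * e ^ k) * ennreal (indicator (I k) x * J x))"
      using sum_le_suminf[of "\<lambda>k. ennreal (C * e ^ k) * ennreal (indicator (I k) x * J x)" "{k}"] by simp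
    finally show ?thesis by (rule order_trans) simp
  qed
  have "(\<integral>\<^sup>+x. ennreal (J x * exp (lam * x)) \<partial>lborel)
     \<le> (\<integral>\<^sup>+x. ennreal (exp lam) * ennreal (J x) + (\<Sum>k. ennreal (C * e ^ k) * ennreal (indicator (I k) x * J x)) \<partial>lborel)"
    by (intro nn_integral_mono pw)
  also have "\<dots> = ennreal (exp lam) * (\<integral>\<^sup>+x. ennreal (J x) \<partial>lborel) + (\<Sum>k. ennreal (C * e ^ k) * (\<integral>\<^sup>+x. ennreal (indicator (I k) x * J x) \<partial>lborel))"
    by (simp add: nn_integral_add nn_integral_suminf nn_integral_cmult I_def)
  also have "\<dots> \<le> ennreal (exp lam) * 1 + (\<Sum>k. ennreal (C * e ^ k) * ennreal (K * (1/2)^k))"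
  proof (rule add_mono)
    have "(\<integral>\<^sup>+x. ennreal (J x) \<partial>lborel) \<le> 1"
      using nn_integral_eq_integral[OF Jint] Jn Jm by simp
    then show "ennreal (exp lam) * (\<integral>\<^sup>+x. ennreal (J x) \<partial>lborel) \<le> ennreal (exp lam) * 1"
      by (rule mult_left_mono) simp
    have "ennreal (C * e ^ k) * (\<integral>\<^sup>+x. ennreal (indicator (I k) x * J x) \<partial>lborel) \<le> ennreal (C * e ^ k) * ennreal (K * (1/2)^k)" for k
    proof -
      have "(\<integral>\<^sup>+x. ennreal (indicator (I k) x * J x) \<partial>lborel) \<le> (\<integral>\<^sup>+z. ennreal (indicator {real k * h + 1..} z * J z) \<partial>lborel)"
        by (intro nn_integral_mono ennreal_leI) (use Jn in \<open>auto simp: I_def indicator_def\<close>)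
      also have "\<dots> \<le> ennreal (K * (1/2)^k)" by (rule Tb)
      finally show ?thesis by (rule mult_left_mono) simp
    qed
    then show "(\<Sum>k. ennreal (C * e ^ k) * (\<integral>\<^sup>+x. ennreal (indicator (I k) x * J x) \<partial>lborel)) \<le> (\<Sum>k. ennreal (C * e ^ k) * ennreal (K * (1/2)^k))"
      by (intro suminf_le) auto
  qed
  also have "\<dots> = ennreal (exp lam) + (\<Sum>k. ennreal (C * K * r ^ k))"
    using Cpos epos Kn by (simp add: ennreal_mult[symmetric] r_def power_divide mult_ac)
  also have "\<dots> = ennreal (exp lam) + ennreal (\<Sum>k. C * K * r ^ k)"
    using r Cpos Kn by (subst suminf_ennreal2) (auto intro!: summable_mult summable_geometric)
  also have "\<dots> < \<infinity>" by simp
  finally show ?thesis using lam by blast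
qed



theorem theorem5p2:
  fixes d :: real and J :: "real \<Rightarrow> real"
    and f f' :: "real \<Rightarrow> real"
    and c :: "real \<Rightarrow> real" and \<phi> \<phi>' :: "real \<Rightarrow> real \<Rightarrow> real"
  assumes d_pos: "d > 0"
    and J_cont: "continuous_on UNIV J"
    and J_bdd: "bounded (range J)"
    and J_nonneg: "\<And>x. J x \<ge> 0"
    and J0: "J 0 > 0"
    and J_int: "integrable lborel J"
    and J_mass: "integral\<^sup>L lborel J = 1"
    and J_even: "\<And>x. J (- x) = J x"
    and J_double: "(\<integral>\<^sup>+ x. indicator {..0} x *
                      (\<integral>\<^sup>+ y. indicator {0..} y * ennreal (J (x - y)) \<partial>lborel) \<partial>lborel) < \<infinity>"
    and J_no_exp: "\<not> (\<exists>lam>0. (\<integral>\<^sup>+ x. ennreal (J x * exp (lam * x)) \<partial>lborel) < \<infinity>)"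
    and f_deriv: "\<And>u. u \<ge> 0 \<Longrightarrow> (f has_real_derivative f' u) (at u within {0..})"
    and f'_cont: "continuous_on {0..} f'"
    and f0: "f 0 = 0" and f1: "f 1 = 0"
    and f_pos: "\<And>u. 0 < u \<Longrightarrow> u < 1 \<Longrightarrow> f u > 0"
    and f'0: "f' 0 > 0" and f'1: "f' 1 < 0"
    and f_KPP: "\<And>u v. 0 < u \<Longrightarrow> u \<le> v \<Longrightarrow> f v / v \<le> f u / u"
    and c_pos: "\<And>\<mu>. \<mu> > 0 \<Longrightarrow> c \<mu> > 0"
    and \<phi>_deriv: "\<And>\<mu> x. \<mu> > 0 \<Longrightarrow> x \<le> 0 \<Longrightarrow>
                     (\<phi> \<mu> has_real_derivative \<phi>' \<mu> x) (at x within {..0})"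
    and \<phi>'_cont: "\<And>\<mu>. \<mu> > 0 \<Longrightarrow> continuous_on {..0} (\<phi>' \<mu>)"
    and \<phi>_nonneg: "\<And>\<mu> x. \<mu> > 0 \<Longrightarrow> x \<le> 0 \<Longrightarrow> \<phi> \<mu> x \<ge> 0"
    and \<phi>_noninc: "\<And>\<mu> x y. \<mu> > 0 \<Longrightarrow> x \<le> y \<Longrightarrow> y \<le> 0 \<Longrightarrow> \<phi> \<mu> y \<le> \<phi> \<mu> x"
    and \<phi>_eq: "\<And>\<mu> x. \<mu> > 0 \<Longrightarrow> x < 0 \<Longrightarrow>
                 d * (LINT y:{..0}|lborel. J (x - y) * \<phi> \<mu> y) - d * \<phi> \<mu> x
                 + c \<mu> * \<phi>' \<mu> x + f (\<phi> \<mu> x) = 0"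
    and \<phi>_minf: "\<And>\<mu>. \<mu> > 0 \<Longrightarrow> (\<phi> \<mu> \<longlongrightarrow> 1) at_bot"
    and \<phi>_zero: "\<And>\<mu>. \<mu> > 0 \<Longrightarrow> \<phi> \<mu> 0 = 0"
    and c_free_boundary: "\<And>\<mu>. \<mu> > 0 \<Longrightarrow>
          c \<mu> = \<mu> * (LINT x:{..0}|lborel. (LINT y:{0..}|lborel. J (x - y) * \<phi> \<mu> x))"
  shows "filterlim c at_top at_top"

proof (rule ccontr)
  assume nf: "\<not> filterlim c at_top at_top"
  then obtain Z where "\<not> eventually (\<lambda>x. Z \<le> c x) at_top"
    unfolding filterlim_at_top by blast
  then have freqZ: "\<exists>\<mu>\<ge>N. c \<mu> < Z" for N
    unfolding eventually_at_top_linorder by (meson not_le)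
  define C where "C = max Z 1"
  have Cpos: "C > 0" by (simp add: C_def)
  have freq: "\<exists>\<mu>. \<mu> \<ge> N \<and> \<mu> > 0 \<and> c \<mu> < C" for N
  proof -
    obtain \<mu> where "\<mu> \<ge> max N 1" "c \<mu> < Z" using freqZ by blast
    then show ?thesis by (intro exI[of _ \<mu>]) (auto simp: C_def)
  qed
  have Jmeas[measurable]: "J \<in> borel_measurable borel" using J_cont by (simp add: borel_measurable_continuous_onI)
  have Jn: "J x \<ge> 0" for x using J_nonneg .
  have fc: "continuous_on {0..} f"
    unfolding continuous_on_eq_continuous_within using f_deriv DERIV_continuous by fastforce
  define a where "a = 2 * f (1/2)"
  have apos: "a > 0" using f_pos[of "1/2"] by (simp add: a_def)
  have fa: "f u \<ge> a * u" if "0 \<le> u" "u \<le> 1/2" for u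
  proof (cases "u = 0")
    case True then show ?thesis using f0 by simp
  next
    case False
    then have "u > 0" using that by simp
    from f_KPP[OF this that(2)] \<open>u > 0\<close> show ?thesis by (simp add: a_def field_simps)
  qed
  have fnn: "f u \<ge> 0" if "0 \<le> u" "u \<le> 1" for u
    using that f0 f1 f_pos[of u] by (cases "u = 0"; cases "u = 1") auto
  define h where "h = C / a"
  have hpos: "h > 0" using Cpos apos by (simp add: h_def)
  define Tl where "Tl r = (\<integral>\<^sup>+z. ennreal (indicator {r..} z * J z) \<partial>lborel)" for r
  have Jtot: "(\<integral>\<^sup>+z. ennreal (J z) \<partial>lborel) = 1"
    using nn_integral_eq_integral[OF J_int] Jn J_mass by simp
  have Tl1: "Tl r \<le> 1" for r
  proof -
    have "Tl r \<le> (\<integral>\<^sup>+z. ennreal (J z) \<partial>lborel)" unfolding Tl_def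
      by (intro nn_integral_mono ennreal_leI) (use Jn in \<open>auto simp: indicator_def\<close>)
    then show ?thesis using Jtot by simp
  qed
  have Tlmono: "Tl s \<le> Tl r" if "r \<le> s" for r s
    unfolding Tl_def by (intro nn_integral_mono ennreal_leI) (use Jn that in \<open>auto simp: indicator_def\<close>)
  have pb: "\<phi> \<mu> x \<le> 1" if "\<mu> > 0" "x \<le> 0" for \<mu> x
  proof -
    have "eventually (\<lambda>y. \<phi> \<mu> x \<le> \<phi> \<mu> y) at_bot"
      unfolding eventually_at_bot_linorder using \<phi>_noninc[OF that(1)] that(2) by blast
    from tendsto_lowerbound[OF \<phi>_minf[OF that(1)] this] show ?thesis by simp
  qed
  have pcont: "continuous_on {..0} (\<phi> \<mu>)" if "\<mu> > 0" for \<mu>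
    unfolding continuous_on_eq_continuous_within using \<phi>_deriv[OF that] DERIV_continuous by fastforce
  have Mform: "ennreal (c \<mu> / \<mu>) = (\<integral>\<^sup>+x. \<integral>\<^sup>+y. ennreal (indicator {..0} x * indicator {0..} y * J (x - y) * \<phi> \<mu> x) \<partial>lborel \<partial>lborel)"
    if mu: "\<mu> > 0" for \<mu>
  proof -
    define G where "G x = (LINT y:{0..}|lborel. J (x - y) * \<phi> \<mu> x)" for x
    have Gval: "ennreal (indicator {..0} x * G x) = (\<integral>\<^sup>+y. ennreal (indicator {..0} x * indicator {0..} y * J (x - y) * \<phi> \<mu> x) \<partial>lborel)"
      and Gn: "indicator {..0} x * G x \<ge> 0" for x
    proof -
      have int: "integrable lborel (\<lambda>y. indicator {0..} y *\<^sub>R (J (x - y) * \<phi> \<mu> x))"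
        by (intro integrable_mult_indicator integrable_mult_left J_shift_int J_int) simp
      show "indicator {..0} x * G x \<ge> 0"
      proof (cases "x \<le> 0")
        case True
        then show ?thesis unfolding G_def set_lebesgue_integral_def
          using Jn \<phi>_nonneg[OF mu True] by (auto intro!: integral_nonneg_AE simp: indicator_def)
      qed simp
      show "ennreal (indicator {..0} x * G x) = (\<integral>\<^sup>+y. ennreal (indicator {..0} x * indicator {0..} y * J (x - y) * \<phi> \<mu> x) \<partial>lborel)"
      proof (cases "x \<le> 0")
        case True
        have "ennreal (G x) = (\<integral>\<^sup>+y. ennreal (indicator {0..} y *\<^sub>R (J (x - y) * \<phi> \<mu> x)) \<partial>lborel)"
          unfolding G_def set_lebesgue_integral_def
          by (rule nn_integral_eq_integral[OF int, symmetric]) (use Jn \<phi>_nonneg[OF mu True] in \<open>auto simp: indicator_def\<close>)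
        then show ?thesis using True by (simp add: mult_ac)
      qed simp
    qed
    have ne: "(LINT x:{..0}|lborel. G x) \<noteq> 0"
      using c_free_boundary[OF mu] c_pos[OF mu] mu unfolding G_def by auto
    have intG: "integrable lborel (\<lambda>x. indicator {..0} x * G x)"
    proof (rule ccontr)
      assume "\<not> integrable lborel (\<lambda>x. indicator {..0} x * G x)"
      then have "integral\<^sup>L lborel (\<lambda>x. indicator {..0} x * G x) = 0" by (rule not_integrable_integral_eq)
      then show False using ne unfolding set_lebesgue_integral_def by simp
    qed
    have "c \<mu> / \<mu> = integral\<^sup>L lborel (\<lambda>x. indicator {..0} x * G x)"
      using c_free_boundary[OF mu] mu unfolding G_def set_lebesgue_integral_def by simp
    then have "ennreal (c \<mu> / \<mu>) = (\<integral>\<^sup>+x. ennreal (indicator {..0} x * G x) \<partial>lborel)"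
      using nn_integral_eq_integral[OF intG] Gn by simp
    also have "\<dots> = (\<integral>\<^sup>+x. \<integral>\<^sup>+y. ennreal (indicator {..0} x * indicator {0..} y * J (x - y) * \<phi> \<mu> x) \<partial>lborel \<partial>lborel)"
      using Gval by simp
    finally show ?thesis .
  qed
  define K where "K = 8 * (C + d) / d"
  have Kpos: "K \<ge> 0" using Cpos d_pos by (simp add: K_def)
  have key: "Tl (real k * h + 1) \<le> ennreal (K * (1/2)^k)" if k3: "k \<ge> 3" and tau: "Tl 2 \<noteq> 0" for k :: nat
  proof -
    define \<delta> where "\<delta> = (1/2::real)^k"
    have \<delta>pos: "\<delta> > 0" by (simp add: \<delta>_def)
    have "\<delta> \<le> (1/2::real)^3" unfolding \<delta>_def by (rule power_decreasing[OF k3]) auto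
    then have \<delta>8: "\<delta> \<le> 1/8" by (simp add: power_numeral_reduce)
    define \<tau> where "\<tau> = enn2real (Tl 2)"
    have Tl2: "Tl 2 = ennreal \<tau>" using Tl1[of 2] unfolding \<tau>_def
      by (cases "Tl 2") (auto simp: top_unique)
    have "\<tau> \<ge> 0" by (simp add: \<tau>_def)
    moreover have "\<tau> \<noteq> 0" using tau Tl2 by auto
    ultimately have \<tau>pos: "\<tau> > 0" by simp
    define m where "m = \<delta> * min 1 (min (C/(2*d)) \<tau>)"
    have mpos: "m > 0" using \<delta>pos Cpos d_pos \<tau>pos by (simp add: m_def)
    obtain \<mu> where \<mu>: "\<mu> \<ge> C/m + 1" "\<mu> > 0" "c \<mu> < C" using freq by blast
    define M where "M = c \<mu> / \<mu>"
    have Mn: "M \<ge> 0" using c_pos[OF \<mu>(2)] \<mu>(2) by (simp add: M_def)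
    have "C / m < \<mu>" using \<mu>(1) by simp
    then have "C < m * \<mu>" using mpos by (simp add: field_simps)
    then have "c \<mu> < m * \<mu>" using \<mu>(3) by simp
    then have Mm: "M < m" using \<mu>(2) by (simp add: M_def field_simps)
    have M1: "M \<le> \<delta>" "M \<le> \<delta> * (C/(2*d))" "M \<le> \<delta> * \<tau>"
    proof -
      have "m \<le> \<delta> * 1" "m \<le> \<delta> * (C/(2*d))" "m \<le> \<delta> * \<tau>" unfolding m_def
        using \<delta>pos by (intro mult_left_mono; simp)+
      then show "M \<le> \<delta>" "M \<le> \<delta> * (C/(2*d))" "M \<le> \<delta> * \<tau>" using Mm by linarith+
    qed
    define p where "p = \<phi> \<mu>"
    define p' where "p' = \<phi>' \<mu>"
    have pn: "\<And>x. x \<le> 0 \<Longrightarrow> p x \<ge> 0" using \<phi>_nonneg[OF \<mu>(2)] by (simp add: p_def)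
    have pb': "\<And>x. x \<le> 0 \<Longrightarrow> p x \<le> 1" using pb[OF \<mu>(2)] by (simp add: p_def)
    have pm: "\<And>x y. x \<le> y \<Longrightarrow> y \<le> 0 \<Longrightarrow> p y \<le> p x" using \<phi>_noninc[OF \<mu>(2)] by (simp add: p_def)
    have pd: "\<And>x. x \<le> 0 \<Longrightarrow> (p has_real_derivative p' x) (at x within {..0})"
      using \<phi>_deriv[OF \<mu>(2)] by (simp add: p_def p'_def)
    have peq: "\<And>x. x < 0 \<Longrightarrow> d * (LINT y:{..0}|lborel. J (x - y) * p y) - d * p x + c \<mu> * p' x + f (p x) = 0"
      using \<phi>_eq[OF \<mu>(2)] by (simp add: p_def p'_def)
    have p0: "p 0 = 0" using \<phi>_zero[OF \<mu>(2)] by (simp add: p_def)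
    have pc: "continuous_on {..0} p" using pcont[OF \<mu>(2)] by (simp add: p_def)
    have Meq: "(\<integral>\<^sup>+x. \<integral>\<^sup>+y. ennreal (indicator {..0} x * indicator {0..} y * J (x - y) * p x) \<partial>lborel \<partial>lborel) = ennreal M"
      using Mform[OF \<mu>(2)] by (simp add: p_def M_def)
    note L1i = L1[OF J_cont Jn J_int J_mass J_even d_pos fc pd pn pb' pm peq p0 eq_refl[OF Meq] _ _ Mn]
    define I where "I x = integral {x..0} p" for x
    have pint: "p integrable_on {x..y}" if "y \<le> 0" for x y
      by (rule integrable_continuous_interval) (use pc that in \<open>auto intro: continuous_on_subset\<close>)
    have fpint: "(\<lambda>x. f (p x)) integrable_on {x..0}" for x
      by (rule integrable_continuous_interval, rule continuous_on_compose2[OF fc])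
         (use pc pn in \<open>auto intro: continuous_on_subset\<close>)
    have In: "I x \<ge> 0" for x
      unfolding I_def by (rule integral_nonneg[OF pint]) (auto intro: pn)
    have i': "C * p x + d * M \<ge> a * I x" if "x < 0" "p x \<le> 1/2" for x
    proof -
      have "c \<mu> * p x + d * M \<ge> d * enn2real (\<integral>\<^sup>+x'. \<integral>\<^sup>+y. ennreal (indicator {x..0} x' * indicator {..<x-0} y * J (x' - y) * (p (x - 0) - p x)) \<partial>lborel \<partial>lborel) + integral {x..0} (\<lambda>x. f (p x))"
        using L1i[of x 0] that by simp
      moreover have "d * enn2real (\<integral>\<^sup>+x'. \<integral>\<^sup>+y. ennreal (indicator {x..0} x' * indicator {..<x-0} y * J (x' - y) * (p (x - 0) - p x)) \<partial>lborel \<partial>lborel) \<ge> 0"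
        using d_pos by simp
      moreover have "integral {x..0} (\<lambda>x. f (p x)) \<ge> integral {x..0} (\<lambda>y. a * p y)"
      proof (rule integral_le)
        show "(\<lambda>y. a * p y) integrable_on {x..0}" using integrable_cmul[OF pint[of 0 x], of a] by simp
        show "(\<lambda>x. f (p x)) integrable_on {x..0}" by (rule fpint)
        fix y assume "y \<in> {x..0}"
        then have "0 \<le> p y" "p y \<le> 1/2" using pn pm[of x y] that by auto
        then show "a * p y \<le> f (p y)" by (rule fa)
      qed
      moreover have "integral {x..0} (\<lambda>y. a * p y) = a * I x" by (simp add: I_def)
      moreover have "c \<mu> * p x \<le> C * p x" using \<mu>(3) pn[of x] that by (intro mult_right_mono) auto
      ultimately show ?thesis by linarith
    qed
    have Iadd: "I (x - h) \<ge> I x + h * p x" if "x \<le> 0" for x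
    proof -
      have "integral {x-h..x} p + integral {x..0} p = integral {x-h..0} p"
        using Henstock_Kurzweil_Integration.integral_combine[where a="x-h" and c=x and b=0 and f=p] that hpos pint[of 0 "x-h"] by simp
      moreover have "integral {x-h..x} p \<ge> integral {x-h..x} (\<lambda>_. p x)"
        by (rule integral_le) (use pint that pm in auto)
      moreover have "integral {x-h..x} (\<lambda>_. p x) = h * p x" using hpos by simp
      ultimately show ?thesis unfolding I_def by linarith
    qed
    have p1: "p (-1) \<le> \<delta>"
    proof -
      have "ennreal (p (-1)) * Tl 2 \<le> ennreal M"
        using L3[where p=p, OF J_cont Jn J_even pn pm] Meq by (simp add: Tl_def)
      then have "ennreal (p (-1) * \<tau>) \<le> ennreal M" using Tl2 pn[of "-1"] \<tau>pos by (simp add: ennreal_mult)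
      then have "p (-1) * \<tau> \<le> M" using Mn by (simp add: ennreal_le_iff)
      then have "p (-1) * \<tau> \<le> \<delta> * \<tau>" using M1 by linarith
      then show ?thesis using \<tau>pos by simp
    qed
    obtain t where t: "t \<le> -1" "p t \<ge> \<delta>"
    proof -
      have "eventually (\<lambda>y. 1/2 < p y) at_bot"
        using order_tendstoD(1)[OF \<phi>_minf[OF \<mu>(2)], of "1/2"] by (simp add: p_def)
      then obtain N where N: "\<And>y. y \<le> N \<Longrightarrow> 1/2 < p y" unfolding eventually_at_bot_linorder by blast
      show ?thesis using that[of "min N (-1)"] N[of "min N (-1)"] \<delta>8 by simp
    qed
    obtain x1 where x1: "t \<le> x1" "x1 \<le> -1" "p x1 = \<delta>"
    proof -
      have "continuous_on {t..-1} p" using pc by (rule continuous_on_subset) auto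
      then show ?thesis using IVT2'[of p "-1" \<delta> t] p1 t that by blast
    qed
    have gr: "p (x1 - real (Suc j) * h) \<le> 1/2 \<Longrightarrow> I (x1 - real (Suc j) * h) - d * M / a \<ge> 2^j * (h * \<delta> - d * M / a)" for j
    proof (induction j)
      case 0
      have "I (x1 - h) \<ge> I x1 + h * p x1" using Iadd[of x1] x1 by linarith
      then show ?case using In[of x1] x1 by simp
    next
      case (Suc j)
      define x where "x = x1 - real (Suc j) * h"
      have xh: "x1 - real (Suc (Suc j)) * h = x - h" by (simp add: x_def algebra_simps)
      have "real (Suc j) * h \<ge> 0" using hpos by simp
      then have x0: "x < 0" using x1 unfolding x_def by linarith
      have "p x \<le> p (x - h)" using pm[of "x - h" x] x0 hpos by simp
      then have px: "p x \<le> 1/2" using Suc.prems xh by simp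
      have IH: "I x - d * M / a \<ge> 2^j * (h * \<delta> - d * M / a)" using Suc.IH px by (simp add: x_def)
      have "C * p x + d * M \<ge> a * I x" using i'[OF x0 px] .
      then have "(a * I x - d * M) / a \<le> (C * p x) / a" using apos by (intro divide_right_mono) auto
      then have hp: "h * p x \<ge> I x - d * M / a" using apos by (simp add: h_def diff_divide_distrib)
      have "I (x - h) \<ge> I x + h * p x" using Iadd x0 by simp
      moreover have "\<And>(A::real) (B::real) (Cc::real) (H::real). A + H \<le> Cc \<Longrightarrow> A - B \<le> H \<Longrightarrow> 2 * (A - B) \<le> Cc - B" by (simp add: algebra_simps)
      ultimately have "I (x - h) - d * M / a \<ge> 2 * (I x - d * M / a)" using hp by blast
      also have "2 * (I x - d * M / a) \<ge> 2 * (2^j * (h * \<delta> - d * M / a))" using IH by simp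
      finally show ?case using xh by simp
    qed
    obtain j where kj: "k = Suc j" using k3 by (cases k) auto
    have p14: "p (x1 - real k * h) \<ge> 1/4"
    proof (cases "p (x1 - real k * h) \<le> 1/2")
      case False then show ?thesis by simp
    next
      case True
      define x where "x = x1 - real k * h"
      have "real k * h \<ge> 0" using hpos by simp
      then have x0: "x < 0" using x1 unfolding x_def by linarith
      have G: "I x - d * M / a \<ge> 2^j * (h * \<delta> - d * M / a)" using gr[of j] True kj by (simp add: x_def)
      have "C * p x + d * M \<ge> a * I x" using i'[OF x0] True by (simp add: x_def)
      moreover have "a * (I x - d * M / a) = a * I x - d * M" using apos by (simp add: right_diff_distrib)
      ultimately have "C * p x \<ge> a * (I x - d * M / a)" by linarith
      also have "a * (I x - d * M / a) \<ge> a * (2^j * (h * \<delta> - d * M / a))" using G apos by simp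
      also have "a * (2^j * (h * \<delta> - d * M / a)) = 2^j * (C * \<delta> - d * M)"
        using apos by (simp add: h_def field_simps)
      also have "2^j * (C * \<delta> - d * M) \<ge> 2^j * (C * \<delta> / 2)"
        using M1(2) d_pos by (simp add: field_simps)
      also have "2^j * (C * \<delta> / 2) = C / 4"
      proof -
        have "(2::real)^j * \<delta> = 1/2" unfolding \<delta>_def kj by (simp add: power_mult_distrib[symmetric])
        then show ?thesis by (simp add: field_simps)
      qed
      finally have "C / 4 \<le> C * p x" .
      then show ?thesis using Cpos by (simp add: x_def field_simps)
    qed
    define R where "R = real k * h"
    have R0: "R \<ge> 0" using hpos by (simp add: R_def)
    define \<kappa> where "\<kappa> = p (x1 - R) - p x1"
    have \<kappa>: "\<kappa> \<ge> 1/8" using p14 x1 \<delta>8 by (simp add: \<kappa>_def R_def)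
    define E where "E = (\<integral>\<^sup>+x. \<integral>\<^sup>+y. ennreal (indicator {x1..0} x * indicator {..<x1-R} y * J (x - y) * \<kappa>) \<partial>lborel \<partial>lborel)"
    have L1x: "E < \<infinity>" "c \<mu> * p x1 + d * M \<ge> d * enn2real E + integral {x1..0} (\<lambda>x. f (p x))"
      using L1i[of x1 R] x1 R0 unfolding E_def \<kappa>_def by auto
    have L2x: "ennreal \<kappa> * Tl (R + 1) \<le> E"
      using L2[OF J_cont Jn x1(2) R0, of \<kappa>] \<kappa> unfolding E_def Tl_def by simp
    define Tr where "Tr = enn2real (Tl (R + 1))"
    have TlR: "Tl (R + 1) = ennreal Tr" using Tl1[of "R+1"] unfolding Tr_def
      by (cases "Tl (R+1)") (auto simp: top_unique)
    have Trn: "Tr \<ge> 0" by (simp add: Tr_def)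
    have "\<kappa> * Tr \<le> enn2real E"
    proof -
      have "enn2real (ennreal \<kappa> * Tl (R + 1)) \<le> enn2real E"
        using L2x L1x(1) by (intro enn2real_mono) (auto simp: less_top)
      then show ?thesis using TlR \<kappa> Trn by (simp add: ennreal_mult[symmetric])
    qed
    moreover have "integral {x1..0} (\<lambda>x. f (p x)) \<ge> 0"
      by (rule integral_nonneg[OF fpint]) (use pn pb' x1 in \<open>auto intro!: fnn\<close>)
    moreover have "c \<mu> * p x1 \<le> C * \<delta>" using \<mu>(3) x1 \<delta>pos by (simp add: mult_right_mono)
    ultimately have "d * (\<kappa> * Tr) \<le> C * \<delta> + d * M" using L1x(2) d_pos
      by (smt (verit) mult_left_mono)
    moreover have "d * (1/8 * Tr) \<le> d * (\<kappa> * Tr)" using \<kappa> Trn d_pos by (intro mult_left_mono mult_right_mono) auto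
    moreover have "d * M \<le> d * \<delta>" using M1(1) d_pos by simp
    moreover have "d * (1/8 * Tr) = (d * Tr) / 8" by simp
    ultimately have "d * Tr \<le> 8 * (C * \<delta> + d * \<delta>)" by (simp add: algebra_simps)
    then have "Tr \<le> K * \<delta>" using d_pos by (simp add: K_def field_simps)
    then show ?thesis using TlR unfolding R_def \<delta>_def by (simp add: ennreal_leI)
  qed
  have "\<exists>K'. K' \<ge> 0 \<and> (\<forall>k::nat. Tl (real k * h + 1) \<le> ennreal (K' * (1/2)^k))"
  proof (cases "Tl 2 = 0")
    case False
    show ?thesis
    proof (intro exI[of _ "K + 8"] conjI allI)
      show "K + 8 \<ge> 0" using Kpos by simp
      fix k :: nat
      show "Tl (real k * h + 1) \<le> ennreal ((K + 8) * (1/2)^k)"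
      proof (cases "k \<ge> 3")
        case True
        have "K * (1/2)^k \<le> (K + 8) * (1/2::real)^k" by (simp add: mult_right_mono)
        then show ?thesis using key[OF True False] by (meson ennreal_leI order_trans)
      next
        case False
        then have "(1/2::real)^2 \<le> (1/2)^k" by (intro power_decreasing) auto
        moreover have "(1/2::real)^2 = 1/4" by (simp add: power2_eq_square)
        ultimately have "1 \<le> 8 * (1/2::real)^k" by linarith
        also have "\<dots> \<le> (K + 8) * (1/2)^k" using Kpos by (simp add: mult_right_mono)
        finally have "ennreal 1 \<le> ennreal ((K + 8) * (1/2)^k)" by (rule ennreal_leI)
        then have e: "(1::ennreal) \<le> ennreal ((K + 8) * (1/2)^k)" by simp
        show ?thesis using order_trans[OF Tl1 e] .
      qed
    qed
  next
    case True
    define k0 where "k0 = nat \<lceil>1 / h\<rceil>"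
    show ?thesis
    proof (intro exI[of _ "2 ^ k0"] conjI allI)
      show "(2::real) ^ k0 \<ge> 0" by simp
      fix k :: nat
      show "Tl (real k * h + 1) \<le> ennreal (2 ^ k0 * (1/2)^k)"
      proof (cases "real k * h + 1 \<ge> 2")
        case True
        then show ?thesis using Tlmono[OF True] \<open>Tl 2 = 0\<close> by simp
      next
        case False
        then have "real k * h < 1" by simp
        then have "real k < 1 / h" using hpos by (simp add: field_simps)
        then have "k \<le> k0" unfolding k0_def by linarith
        then have "(2::real) ^ k0 * (1/2)^k \<ge> 1"
          by (simp add: power_diff[symmetric] field_simps flip: power_add)
        then have "ennreal 1 \<le> ennreal (2 ^ k0 * (1/2)^k)" by (rule ennreal_leI)
        then have e: "(1::ennreal) \<le> ennreal (2 ^ k0 * (1/2)^k)" by simp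
        show ?thesis using order_trans[OF Tl1 e] .
      qed
    qed
  qed
  then obtain K' where K': "K' \<ge> 0" "\<And>k::nat. Tl (real k * h + 1) \<le> ennreal (K' * (1/2)^k)" by blast
  have "\<exists>lam>0. (\<integral>\<^sup>+x. ennreal (J x * exp (lam * x)) \<partial>lborel) < \<infinity>"
    by (rule L4[OF J_cont Jn J_int J_mass hpos K'(1)]) (use K'(2) in \<open>simp add: Tl_def\<close>)
  then show False using J_no_exp by blast
qed


end
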